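(* Let $\mathcal{F}(X)\subseteq\Psi$ with admissible topology $\Delta$, and suppose there is a base $\beta$ for the topology of $X$ with $U^+=\{A\in\Psi:A\subseteq U\}\in\Delta$ for every $U\in\beta$. Then $(X,\mathbb{F})$ is weakly mixing of all orders if and only if $(\Psi,\overline{\mathbb{F}})$ is weakly mixing of all orders.
   Context: $(X,d)$ compact metric, $\mathbb{F}=(f_n)$ continuous self-maps, $\omega_n=f_n\circ\cdots\circ f_1$. Weak mixing of order $k$: for any non-empty open $U_1,\dots,U_k,V_1,\dots,V_k$ there is $n$ with $\omega_n(U_i)\cap V_i\neq\emptyset$ for all $i$. $\mathcal{F}(X)$: non-empty finite subsets; $\Psi\subseteq\mathcal{K}(X)$ invariant under all $\omega_k$; induced system $\overline{\omega}_k(A)=\omega_k(A)$, notions defined analogously on $(\Psi,\Delta)$. Admissible topology: hit-and-miss or hit-and-far-miss type topology with $x\mapsto\{x\}$ continuous, generated by $U^-=\{A:A\cap U\neq\emptyset\}$ and miss sets $(E^c)^+$ or $(E^c)^{++}$ for $E$ in a fixed family of closed sets; induced maps continuous. *)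

theory Defs
  imports "HOL-Analysis.Analysis"
begin

text \<open>Nonautonomous system: maps f 1, f 2, ... (f 0 is unused);
  omega f n = f n o ... o f 1, with omega f 0 = id.\<close>
fun omega :: "(nat \<Rightarrow> 'a \<Rightarrow> 'a) \<Rightarrow> nat \<Rightarrow> 'a \<Rightarrow> 'a" where
  "omega f 0 = id"
| "omega f (Suc n) = f (Suc n) \<circ> omega f n"

definition weakly_mixing_order :: "'b topology \<Rightarrow> (nat \<Rightarrow> 'b \<Rightarrow> 'b) \<Rightarrow> nat \<Rightarrow> bool" where
  "weakly_mixing_order T g k \<longleftrightarrow>
     (\<forall>U V. (\<forall>i<k. openin T (U i) \<and> U i \<noteq> {} \<and> openin T (V i) \<and> V i \<noteq> {}) \<longrightarrow>
        (\<exists>n\<ge>1. \<forall>i<k. g n ` (U i) \<inter> V i \<noteq> {}))"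

definition weakly_mixing_all_orders :: "'b topology \<Rightarrow> (nat \<Rightarrow> 'b \<Rightarrow> 'b) \<Rightarrow> bool" where
  "weakly_mixing_all_orders T g \<longleftrightarrow> (\<forall>k\<ge>1. weakly_mixing_order T g k)"

definition hit_set :: "'a set set \<Rightarrow> 'a set \<Rightarrow> 'a set set" where
  "hit_set \<Psi> U = {A \<in> \<Psi>. A \<inter> U \<noteq> {}}"

definition miss_set :: "'a set set \<Rightarrow> 'a set \<Rightarrow> 'a set set" where
  "miss_set \<Psi> U = {A \<in> \<Psi>. A \<subseteq> U}"

definition far_miss_set :: "'a::metric_space set set \<Rightarrow> 'a set \<Rightarrow> 'a set set" where
  "far_miss_set \<Psi> U = {A \<in> \<Psi>. \<exists>e>0. (\<Union>a\<in>A. ball a e) \<subseteq> U}"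

definition hit_miss_topology :: "bool \<Rightarrow> 'a::metric_space set set \<Rightarrow> 'a set set \<Rightarrow> 'a set topology" where
  "hit_miss_topology far \<Psi> \<E> = topology_generated_by
     ({hit_set \<Psi> U | U. open U} \<union>
      {(if far then far_miss_set \<Psi> (- E) else miss_set \<Psi> (- E)) | E. E \<in> \<E>})"

definition admissible_topology ::
  "(nat \<Rightarrow> 'a::metric_space \<Rightarrow> 'a) \<Rightarrow> 'a set set \<Rightarrow> 'a set topology \<Rightarrow> bool" where
  "admissible_topology f \<Psi> \<Delta> \<longleftrightarrow>
     (\<exists>far \<E>. (\<forall>E\<in>\<E>. closed E) \<and> \<Delta> = hit_miss_topology far \<Psi> \<E>) \<and>
     continuous_map euclidean \<Delta> (\<lambda>x. {x}) \<and>
     (\<forall>n. continuous_map \<Delta> \<Delta> (\<lambda>A. omega f n ` A))"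

end

theory Submission
  imports Defs
begin

definition hclose :: "real \<Rightarrow> 'a::metric_space set \<Rightarrow> 'a set \<Rightarrow> bool" where
  "hclose e A G \<longleftrightarrow> (\<forall>x\<in>A. \<exists>y\<in>G. dist x y < e) \<and> (\<forall>y\<in>G. \<exists>x\<in>A. dist x y < e)"

lemma hclose_mono: "hclose e A G \<Longrightarrow> e \<le> e' \<Longrightarrow> hclose e' A G"
  unfolding hclose_def by (meson less_le_trans)

lemma gen_nbhd:
  fixes \<Psi> :: "'a::metric_space set set"
  assumes psi3: "\<And>A. A \<in> \<Psi> \<Longrightarrow> A \<noteq> {} \<and> compact A"
    and psi4: "\<And>A. A \<noteq> {} \<Longrightarrow> finite A \<Longrightarrow> A \<in> \<Psi>"
    and cl: "\<forall>E\<in>\<E>. closed E"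
    and gen: "generate_topology_on
     ({hit_set \<Psi> U | U. open U} \<union>
      {(if far then far_miss_set \<Psi> (- E) else miss_set \<Psi> (- E)) | E. E \<in> \<E>}) W"
  shows "W \<subseteq> \<Psi> \<and> (\<forall>A\<in>W. \<exists>e>0. \<forall>G. finite G \<and> G \<noteq> {} \<and> hclose e A G \<longrightarrow> G \<in> W)"
  using gen
proof (induction rule: generate_topology_on.induct)
  case Empty
  then show ?case by simp
next
  case (Int a b)
  have Pa: "a \<subseteq> \<Psi> \<and> (\<forall>A\<in>a. \<exists>e>0. \<forall>G. finite G \<and> G \<noteq> {} \<and> hclose e A G \<longrightarrow> G \<in> a)"
    using Int.IH(1) .
  have Pb: "b \<subseteq> \<Psi> \<and> (\<forall>A\<in>b. \<exists>e>0. \<forall>G. finite G \<and> G \<noteq> {} \<and> hclose e A G \<longrightarrow> G \<in> b)"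
    using Int.IH(2) .
  show ?case
  proof (intro conjI ballI)
    show "a \<inter> b \<subseteq> \<Psi>" using Pa by blast
    fix A assume A: "A \<in> a \<inter> b"
    obtain e1 where e1: "e1 > 0" "\<forall>G. finite G \<and> G \<noteq> {} \<and> hclose e1 A G \<longrightarrow> G \<in> a"
      using Pa A by blast
    obtain e2 where e2: "e2 > 0" "\<forall>G. finite G \<and> G \<noteq> {} \<and> hclose e2 A G \<longrightarrow> G \<in> b"
      using Pb A by blast
    show "\<exists>e>0. \<forall>G. finite G \<and> G \<noteq> {} \<and> hclose e A G \<longrightarrow> G \<in> a \<inter> b"
    proof (intro exI[of _ "min e1 e2"] conjI allI impI)
      show "0 < min e1 e2" using e1 e2 by simp
      fix G assume G: "finite G \<and> G \<noteq> {} \<and> hclose (min e1 e2) A G"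
      then have "hclose e1 A G" "hclose e2 A G" using hclose_mono[of "min e1 e2" A G] G by auto
      then show "G \<in> a \<inter> b" using G e1(2) e2(2) by blast
    qed
  qed
next
  case (UN K)
  show ?case
  proof (intro conjI ballI)
    show "\<Union>K \<subseteq> \<Psi>" using UN by blast
    fix A assume "A \<in> \<Union>K"
    then obtain k where k: "k \<in> K" "A \<in> k" by blast
    then obtain e where "e > 0" "\<forall>G. finite G \<and> G \<noteq> {} \<and> hclose e A G \<longrightarrow> G \<in> k"
      using UN.IH by blast
    then show "\<exists>e>0. \<forall>G. finite G \<and> G \<noteq> {} \<and> hclose e A G \<longrightarrow> G \<in> \<Union>K"
      using k by blast
  qed
next
  case (Basis s)
  then consider (hit) U where "open U" "s = hit_set \<Psi> U"
    | (miss) E where "E \<in> \<E>" "\<not> far" "s = miss_set \<Psi> (- E)"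
    | (far) E where "E \<in> \<E>" "far" "s = far_miss_set \<Psi> (- E)"
  proof -
    have "(\<exists>U. open U \<and> s = hit_set \<Psi> U) \<or> (\<exists>E. E \<in> \<E> \<and> \<not> far \<and> s = miss_set \<Psi> (- E))
       \<or> (\<exists>E. E \<in> \<E> \<and> far \<and> s = far_miss_set \<Psi> (- E))"
    proof (cases "s \<in> {hit_set \<Psi> U | U. open U}")
      case True
      then show ?thesis by blast
    next
      case False
      then obtain E where E: "E \<in> \<E>" "s = (if far then far_miss_set \<Psi> (- E) else miss_set \<Psi> (- E))"
        using Basis by blast
      show ?thesis
      proof (cases far)
        case True
        then have "s = far_miss_set \<Psi> (- E)" using E by simp
        then show ?thesis using E True by blast
      next
        case False
        then have "s = miss_set \<Psi> (- E)" using E by simp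
        then show ?thesis using E False by blast
      qed
    qed
    then show ?thesis using that by blast
  qed
  then show ?case
  proof cases
    case hit
    show ?thesis
    proof (intro conjI ballI)
      show "s \<subseteq> \<Psi>" using hit by (auto simp: hit_set_def)
      fix A assume "A \<in> s"
      then obtain x where x: "x \<in> A" "x \<in> U" using hit by (auto simp: hit_set_def)
      then obtain e where e: "e > 0" "ball x e \<subseteq> U" using hit open_contains_ball by blast
      show "\<exists>e>0. \<forall>G. finite G \<and> G \<noteq> {} \<and> hclose e A G \<longrightarrow> G \<in> s"
      proof (intro exI[of _ e] conjI allI impI)
        fix G assume G: "finite G \<and> G \<noteq> {} \<and> hclose e A G"
        then obtain y where "y \<in> G" "dist x y < e" using x unfolding hclose_def by blast
        then have "y \<in> U" using e by auto
        then show "G \<in> s" using G psi4 hit \<open>y \<in> G\<close> by (auto simp: hit_set_def)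
      qed (use e in auto)
    qed
  next
    case miss
    show ?thesis
    proof (intro conjI ballI)
      show "s \<subseteq> \<Psi>" using miss by (auto simp: miss_set_def)
      fix A assume "A \<in> s"
      then have "compact A" "A \<subseteq> - E" using miss psi3 by (auto simp: miss_set_def)
      moreover have "open (- E)" using cl miss by auto
      ultimately obtain e where e: "e > 0" "(\<Union>x\<in>A. ball x e) \<subseteq> - E"
        using compact_subset_open_imp_ball_epsilon_subset by metis
      show "\<exists>e>0. \<forall>G. finite G \<and> G \<noteq> {} \<and> hclose e A G \<longrightarrow> G \<in> s"
      proof (intro exI[of _ e] conjI allI impI)
        fix G assume G: "finite G \<and> G \<noteq> {} \<and> hclose e A G"
        have "G \<subseteq> - E"
        proof
          fix y assume "y \<in> G"
          then obtain x where "x \<in> A" "dist x y < e" using G unfolding hclose_def by blast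
          then have "y \<in> ball x e" by simp
          moreover have "ball x e \<subseteq> - E" using e(2) \<open>x \<in> A\<close> by (simp add: UN_subset_iff)
          ultimately show "y \<in> - E" by (rule rev_subsetD)
        qed
        then show "G \<in> s" using G psi4 miss by (auto simp: miss_set_def)
      qed (use e in auto)
    qed
  next
    case far
    show ?thesis
    proof (intro conjI ballI)
      show "s \<subseteq> \<Psi>" using far by (auto simp: far_miss_set_def)
      fix A assume "A \<in> s"
      then obtain e0 where e0: "e0 > 0" "(\<Union>a\<in>A. ball a e0) \<subseteq> - E"
        using far by (auto simp: far_miss_set_def)
      show "\<exists>e>0. \<forall>G. finite G \<and> G \<noteq> {} \<and> hclose e A G \<longrightarrow> G \<in> s"
      proof (intro exI[of _ "e0/2"] conjI allI impI)
        fix G assume G: "finite G \<and> G \<noteq> {} \<and> hclose (e0/2) A G"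
        have "(\<Union>y\<in>G. ball y (e0/2)) \<subseteq> - E"
        proof
          fix z assume "z \<in> (\<Union>y\<in>G. ball y (e0/2))"
          then obtain y where y: "y \<in> G" "dist y z < e0/2" by auto
          then obtain x where x: "x \<in> A" "dist x y < e0/2" using G unfolding hclose_def by blast
          have "dist x z < e0" using x y dist_triangle[of x z y] by linarith
          then have "z \<in> ball x e0" by simp
          moreover have "ball x e0 \<subseteq> - E" using e0(2) x(1) by (simp add: UN_subset_iff)
          ultimately show "z \<in> - E" by (rule rev_subsetD)
        qed
        then show "G \<in> s" using G psi4 far e0 by (auto simp: far_miss_set_def)
      qed (use e0 in auto)
    qed
  qed
qed

theorem mainTheorem5:
  fixes f :: "nat \<Rightarrow> 'a::metric_space \<Rightarrow> 'a"
    and \<Psi> :: "'a set set"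
    and \<Delta> :: "'a set topology"
    and \<beta> :: "'a set set"
  assumes "compact (UNIV :: 'a set)"
    and "\<And>n. n \<ge> 1 \<Longrightarrow> continuous_on UNIV (f n)"
    and "\<And>A. A \<in> \<Psi> \<Longrightarrow> A \<noteq> {} \<and> compact A"
    and "\<And>A. A \<noteq> {} \<Longrightarrow> finite A \<Longrightarrow> A \<in> \<Psi>"
    and "\<And>k A. A \<in> \<Psi> \<Longrightarrow> omega f k ` A \<in> \<Psi>"
    and "admissible_topology f \<Psi> \<Delta>"
    and "topological_basis \<beta>"
    and "\<And>U. U \<in> \<beta> \<Longrightarrow> openin \<Delta> (miss_set \<Psi> U)"
  shows "weakly_mixing_all_orders euclidean (omega f) \<longleftrightarrow>
         weakly_mixing_all_orders \<Delta> (\<lambda>n A. omega f n ` A)"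
proof -
  obtain far \<E> where cl: "\<forall>E\<in>\<E>. closed E" and D: "\<Delta> = hit_miss_topology far \<Psi> \<E>"
    using assms(6) unfolding admissible_topology_def by blast
  have nb: "openin \<Delta> W \<Longrightarrow> W \<subseteq> \<Psi> \<and> (\<forall>A\<in>W. \<exists>e>0. \<forall>G. finite G \<and> G \<noteq> {} \<and> hclose e A G \<longrightarrow> G \<in> W)" for W
  proof -
    assume "openin \<Delta> W"
    hence g: "generate_topology_on ({hit_set \<Psi> U | U. open U} \<union>
      {(if far then far_miss_set \<Psi> (- E) else miss_set \<Psi> (- E)) | E. E \<in> \<E>}) W"
      using \<open>openin \<Delta> W\<close> D unfolding hit_miss_topology_def by (simp only: openin_topology_generated_by_iff)
    show ?thesis by (rule gen_nbhd[OF _ _ cl g]) (use assms(3,4) in auto)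
  qed
  have hitopen: "open U \<Longrightarrow> openin \<Delta> (hit_set \<Psi> U)" for U
    unfolding D hit_miss_topology_def openin_topology_generated_by_iff
    by (rule generate_topology_on.Basis) blast
  show ?thesis
  proof
    assume wm: "weakly_mixing_all_orders euclidean (omega f)"
    show "weakly_mixing_all_orders \<Delta> (\<lambda>n A. omega f n ` A)"
      unfolding weakly_mixing_all_orders_def weakly_mixing_order_def
    proof (intro allI impI)
      fix k :: nat and \<U> \<V> :: "nat \<Rightarrow> 'a set set"
      assume k: "k \<ge> 1"
        and UV: "\<forall>i<k. openin \<Delta> (\<U> i) \<and> \<U> i \<noteq> {} \<and> openin \<Delta> (\<V> i) \<and> \<V> i \<noteq> {}"
      have "\<forall>i<k. \<exists>A e B e'. A \<in> \<U> i \<and> e > 0 \<and> (\<forall>G. finite G \<and> G \<noteq> {} \<and> hclose e A G \<longrightarrow> G \<in> \<U> i)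
           \<and> B \<in> \<V> i \<and> e' > 0 \<and> (\<forall>G. finite G \<and> G \<noteq> {} \<and> hclose e' B G \<longrightarrow> G \<in> \<V> i)"
      proof (intro allI impI)
        fix i assume i: "i < k"
        obtain A where A: "A \<in> \<U> i" using UV i by blast
        obtain B where B: "B \<in> \<V> i" using UV i by blast
        show "\<exists>A e B e'. A \<in> \<U> i \<and> e > 0 \<and> (\<forall>G. finite G \<and> G \<noteq> {} \<and> hclose e A G \<longrightarrow> G \<in> \<U> i)
           \<and> B \<in> \<V> i \<and> e' > 0 \<and> (\<forall>G. finite G \<and> G \<noteq> {} \<and> hclose e' B G \<longrightarrow> G \<in> \<V> i)"
          using nb[of "\<U> i"] nb[of "\<V> i"] UV i A B by meson
      qed
      then obtain A eA B eB where AB: "\<forall>i<k. A i \<in> \<U> i \<and> eA i > 0 \<and> (\<forall>G. finite G \<and> G \<noteq> {} \<and> hclose (eA i) (A i) G \<longrightarrow> G \<in> \<U> i)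
           \<and> B i \<in> \<V> i \<and> eB i > 0 \<and> (\<forall>G. finite G \<and> G \<noteq> {} \<and> hclose (eB i) (B i) G \<longrightarrow> G \<in> \<V> i)"
        by metis
      have AP: "A i \<in> \<Psi>" "B i \<in> \<Psi>" if "i < k" for i using AB nb UV that by blast+
      define d where "d = Min ((\<lambda>i. min (eA i) (eB i)) ` {..<k})"
      have dpos: "d > 0" proof -
        have "0 \<in> {..<k}" using k by simp
        then have "{..<k} \<noteq> {}" by blast
        then show ?thesis unfolding d_def using AB by (subst Min_gr_iff) auto
      qed
      have dle: "d \<le> eA i" "d \<le> eB i" if "i < k" for i
      proof -
        have "min (eA i) (eB i) \<in> (\<lambda>i. min (eA i) (eB i)) ` {..<k}" by (rule imageI) (simp add: that)
        then have "d \<le> min (eA i) (eB i)" unfolding d_def by (intro Min_le) auto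
        then show "d \<le> eA i" "d \<le> eB i" by auto
      qed
      define \<delta> where "\<delta> = d / 2"
      have \<delta>: "\<delta> > 0" using dpos \<delta>_def by simp
      have net: "\<exists>F. finite F \<and> F \<subseteq> C \<and> C \<subseteq> (\<Union>x\<in>F. ball x \<delta>)" if "C \<in> \<Psi>" for C
        using seq_compact_imp_totally_bounded[OF compact_imp_seq_compact] assms(3)[OF that] \<delta> by blast
      have "\<exists>F. finite F \<and> F \<subseteq> A i \<and> A i \<subseteq> (\<Union>x\<in>F. ball x \<delta>)" if "i < k" for i
        using net[OF AP(1)[OF that]] .
      then obtain FA where FA: "\<And>i. i < k \<Longrightarrow> finite (FA i) \<and> FA i \<subseteq> A i \<and> A i \<subseteq> (\<Union>x\<in>FA i. ball x \<delta>)"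
        by metis
      have "\<exists>F. finite F \<and> F \<subseteq> B i \<and> B i \<subseteq> (\<Union>x\<in>F. ball x \<delta>)" if "i < k" for i
        using net[OF AP(2)[OF that]] .
      then obtain FB where FB: "\<And>i. i < k \<Longrightarrow> finite (FB i) \<and> FB i \<subseteq> B i \<and> B i \<subseteq> (\<Union>x\<in>FB i. ball x \<delta>)"
        by metis
      have FAne: "FA i \<noteq> {}" "FB i \<noteq> {}" if "i < k" for i
        using FA[OF that] FB[OF that] AP[OF that] assms(3) by blast+
      define T where "T = Sigma {..<k} (\<lambda>i. FA i \<times> FB i)"
      have Tfin: "finite T" unfolding T_def using FA FB by auto
      have Tne: "T \<noteq> {}"
      proof -
        obtain a b where "a \<in> FA 0" "b \<in> FB 0" using FAne[of 0] k by fastforce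
        moreover have "(0::nat) < k" using k by simp
        ultimately have "(0, a, b) \<in> T" unfolding T_def by blast
        then show ?thesis by blast
      qed
      obtain h where h: "bij_betw h {..<card T} T"
        using ex_bij_betw_nat_finite[OF Tfin] lessThan_atLeast0 by metis
      have cT: "card T \<ge> 1" using Tfin Tne by (simp add: Suc_le_eq card_gt_0_iff)
      have P: "\<forall>j<card T. openin euclidean (ball (fst (snd (h j))) \<delta>) \<and> ball (fst (snd (h j))) \<delta> \<noteq> {}
              \<and> openin euclidean (ball (snd (snd (h j))) \<delta>) \<and> ball (snd (snd (h j))) \<delta> \<noteq> {}"
        using \<delta> by auto
      have "weakly_mixing_order euclidean (omega f) (card T)"
        using wm cT unfolding weakly_mixing_all_orders_def by blast
      then have "\<exists>n\<ge>1. \<forall>j<card T. omega f n ` ball (fst (snd (h j))) \<delta> \<inter> ball (snd (snd (h j))) \<delta> \<noteq> {}"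
        unfolding weakly_mixing_order_def
        apply (rule allE[of _ "\<lambda>j. ball (fst (snd (h j))) \<delta>"])
        apply (erule allE[of _ "\<lambda>j. ball (snd (snd (h j))) \<delta>"])
        using P by blast
      then obtain n where n: "n \<ge> 1" and
        hn: "\<forall>j<card T. omega f n ` ball (fst (snd (h j))) \<delta> \<inter> ball (snd (snd (h j))) \<delta> \<noteq> {}"
        by blast
      have "\<forall>t\<in>T. \<exists>x. dist (fst (snd t)) x < \<delta> \<and> dist (snd (snd t)) (omega f n x) < \<delta>"
      proof
        fix t assume "t \<in> T"
        then obtain j where "j < card T" "t = h j" using h by (metis bij_betw_imp_surj_on imageE lessThan_iff)
        then show "\<exists>x. dist (fst (snd t)) x < \<delta> \<and> dist (snd (snd t)) (omega f n x) < \<delta>"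
          using hn by fastforce
      qed
      then obtain xf where xf: "\<And>t. t \<in> T \<Longrightarrow> dist (fst (snd t)) (xf t) < \<delta> \<and> dist (snd (snd t)) (omega f n (xf t)) < \<delta>"
        by metis
      define G where "G i = (\<lambda>(a,b). xf (i,a,b)) ` (FA i \<times> FB i)" for i
      show "\<exists>n\<ge>1. \<forall>i<k. (\<lambda>A. omega f n ` A) ` \<U> i \<inter> \<V> i \<noteq> {}"
      proof (intro exI[of _ n] conjI allI impI)
        fix i assume i: "i < k"
        have xfi: "dist a (xf (i,a,b)) < \<delta> \<and> dist b (omega f n (xf (i,a,b))) < \<delta>"
          if "a \<in> FA i" "b \<in> FB i" for a b
          using xf[of "(i,a,b)"] that i unfolding T_def by auto
        obtain b0 where b0: "b0 \<in> FB i" using FAne i by blast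
        obtain a0 where a0: "a0 \<in> FA i" using FAne i by blast
        have Gfin: "finite (G i)" "G i \<noteq> {}" unfolding G_def using FA FB i FAne by auto
        have "hclose (eA i) (A i) (G i)"
          unfolding hclose_def
        proof (intro conjI ballI)
          fix x assume "x \<in> A i"
          then obtain a where a: "a \<in> FA i" "dist a x < \<delta>" using FA[OF i] by auto
          have "dist x (xf (i,a,b0)) < eA i"
            using xfi[OF a(1) b0] a dist_triangle[of x "xf (i,a,b0)" a] dist_commute[of a x] dle[OF i] \<delta>_def
            by linarith
          moreover have "xf (i,a,b0) \<in> G i" unfolding G_def using a b0 by force
          ultimately show "\<exists>y\<in>G i. dist x y < eA i" by blast
        next
          fix y assume "y \<in> G i"
          then obtain a b where ab: "a \<in> FA i" "b \<in> FB i" "y = xf (i,a,b)" unfolding G_def by auto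
          then have "a \<in> A i" "dist a y < eA i" using xfi[OF ab(1,2)] FA[OF i] dle[OF i] \<delta>_def dpos by auto
          then show "\<exists>x\<in>A i. dist x y < eA i" by blast
        qed
        then have GU: "G i \<in> \<U> i" using AB i Gfin by blast
        have Gfin2: "finite (omega f n ` G i)" "omega f n ` G i \<noteq> {}" using Gfin by auto
        have "hclose (eB i) (B i) (omega f n ` G i)"
          unfolding hclose_def
        proof (intro conjI ballI)
          fix x assume "x \<in> B i"
          then obtain b where b: "b \<in> FB i" "dist b x < \<delta>" using FB[OF i] by auto
          have "dist x (omega f n (xf (i,a0,b))) < eB i"
            using xfi[OF a0 b(1)] b dist_triangle[of x "omega f n (xf (i,a0,b))" b] dist_commute[of b x] dle[OF i] \<delta>_def
            by linarith
          moreover have "omega f n (xf (i,a0,b)) \<in> omega f n ` G i" unfolding G_def using a0 b by force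
          ultimately show "\<exists>y\<in>omega f n ` G i. dist x y < eB i" by blast
        next
          fix y assume "y \<in> omega f n ` G i"
          then obtain a b where ab: "a \<in> FA i" "b \<in> FB i" "y = omega f n (xf (i,a,b))" unfolding G_def by auto
          then have "b \<in> B i" "dist b y < eB i" using xfi[OF ab(1,2)] FB[OF i] dle[OF i] \<delta>_def dpos by auto
          then show "\<exists>x\<in>B i. dist x y < eB i" by blast
        qed
        then have "omega f n ` G i \<in> \<V> i" using AB i Gfin2 by blast
        then show "(\<lambda>A. omega f n ` A) ` \<U> i \<inter> \<V> i \<noteq> {}" using GU by blast
      qed (use n in auto)
    qed
  next
    assume wm: "weakly_mixing_all_orders \<Delta> (\<lambda>n A. omega f n ` A)"
    show "weakly_mixing_all_orders euclidean (omega f)"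
      unfolding weakly_mixing_all_orders_def weakly_mixing_order_def
    proof (intro allI impI)
      fix k :: nat and U V :: "nat \<Rightarrow> 'a set"
      assume k: "k \<ge> 1"
        and UV: "\<forall>i<k. openin euclidean (U i) \<and> U i \<noteq> {} \<and> openin euclidean (V i) \<and> V i \<noteq> {}"
      have "\<exists>W. W \<in> \<beta> \<and> W \<noteq> {} \<and> W \<subseteq> U i" if i: "i < k" for i
      proof -
        have o: "open (U i)" using UV i by simp
        obtain x where x: "x \<in> U i" using UV i by blast
        obtain W where "W \<in> \<beta>" "x \<in> W" "W \<subseteq> U i"
          using topological_basisE[OF assms(7) o x] .
        then show ?thesis by blast
      qed
      then obtain W where W: "\<And>i. i < k \<Longrightarrow> W i \<in> \<beta> \<and> W i \<noteq> {} \<and> W i \<subseteq> U i" by metis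
      have P: "openin \<Delta> (miss_set \<Psi> (W i)) \<and> miss_set \<Psi> (W i) \<noteq> {} \<and>
                 openin \<Delta> (hit_set \<Psi> (V i)) \<and> hit_set \<Psi> (V i) \<noteq> {}" if i: "i < k" for i
      proof (intro conjI)
        have Wi: "W i \<in> \<beta>" "W i \<noteq> {}" "W i \<subseteq> U i" using W[OF i] by auto
        show "openin \<Delta> (miss_set \<Psi> (W i))" using assms(8)[OF Wi(1)] .
        obtain x where "x \<in> W i" using Wi(2) by blast
        then have "{x} \<in> miss_set \<Psi> (W i)" using assms(4)[of "{x}"] by (simp add: miss_set_def)
        then show "miss_set \<Psi> (W i) \<noteq> {}" by blast
        have Vi: "open (V i)" "V i \<noteq> {}" using UV i by auto
        show "openin \<Delta> (hit_set \<Psi> (V i))" using hitopen[OF Vi(1)] .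
        obtain y where "y \<in> V i" using Vi(2) by blast
        then have "{y} \<in> hit_set \<Psi> (V i)" using assms(4)[of "{y}"] by (simp add: hit_set_def)
        then show "hit_set \<Psi> (V i) \<noteq> {}" by blast
      qed
      have "weakly_mixing_order \<Delta> (\<lambda>n A. omega f n ` A) k"
        using wm k unfolding weakly_mixing_all_orders_def by blast
      then have "\<exists>n\<ge>1. \<forall>i<k. (\<lambda>A. omega f n ` A) ` miss_set \<Psi> (W i) \<inter> hit_set \<Psi> (V i) \<noteq> {}"
        unfolding weakly_mixing_order_def
        apply (rule allE[of _ "\<lambda>i. miss_set \<Psi> (W i)"])
        apply (erule allE[of _ "\<lambda>i. hit_set \<Psi> (V i)"])
        using P by blast
      then obtain n where n: "n \<ge> 1" and
        hn: "\<forall>i<k. (\<lambda>A. omega f n ` A) ` miss_set \<Psi> (W i) \<inter> hit_set \<Psi> (V i) \<noteq> {}"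
        by blast
      show "\<exists>n\<ge>1. \<forall>i<k. omega f n ` U i \<inter> V i \<noteq> {}"
      proof (intro exI[of _ n] conjI allI impI)
        fix i assume i: "i < k"
        then obtain A where A: "A \<in> miss_set \<Psi> (W i)" "omega f n ` A \<in> hit_set \<Psi> (V i)"
          using hn by blast
        have "A \<subseteq> U i" using A(1) W[OF i] by (auto simp: miss_set_def)
        moreover have "omega f n ` A \<inter> V i \<noteq> {}" using A(2) by (simp add: hit_set_def)
        ultimately show "omega f n ` U i \<inter> V i \<noteq> {}" by blast
      qed (use n in auto)
    qed
  qed
qed

end
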